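(* Let $\mu$ be a probability measure on $\mathrm{Homeo}_+(\mathbb{R})$ with finite or countable support having the shiftability property. Then either $\phi_+(z)+\phi_-(z)=1$ for all $z\in\mathbb{R}$, or $\phi_+(z)+\phi_-(z)=0$ for all $z\in\mathbb{R}$; equivalently, either $\phi_0\equiv 0$ or $\phi_0\equiv 1$.
   Context: Setup. Let $\mu$ be a probability measure on the group $\mathrm{Homeo}_+(\mathbb{R})$ of orientation-preserving homeomorphisms of $\mathbb{R}$, supported on a finite or countable set $\{f_1,f_2,\dots\}$ with $p_i=\mu(\{f_i\})>0$, $\sum_i p_i=1$. Let $g_1,g_2,\dots$ be i.i.d. random maps with law $\mu$, and set $F_0=\mathrm{id}$, $F_n=g_n\circ\cdots\circ g_1$. For $x\in\mathbb{R}$ let $\phi_+(x)=\mathbb{P}(\lim_n F_n(x)=+\infty)$, $\phi_-(x)=\mathbb{P}(\lim_n F_n(x)=-\infty)$, $\phi_0(x)=1-\phi_+(x)-\phi_-(x)$. The system has the shiftability property if for every $x\in\mathbb{R}$ there exist $f,g$ with $\mu(\{f\})>0$, $\mu(\{g\})>0$ and $g(x)<x<f(x)$. *)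

theory Defs
  imports "HOL-Probability.Probability"
begin

text \<open>The countable support of mu is modelled by an index distribution nu on nat
  together with a labelling f of indices by homeomorphisms; mu is the push-forward
  of nu under f.\<close>

definition homeo_plus :: "(real \<Rightarrow> real) \<Rightarrow> bool" where
  "homeo_plus h \<longleftrightarrow> (\<exists>g. homeomorphism UNIV UNIV h g) \<and> strict_mono h"

text \<open>F_0 = id, F_(n+1) = g_(n+1) o F_n where g_(k+1) = f (omega !! k).\<close>
primrec walk :: "(nat \<Rightarrow> real \<Rightarrow> real) \<Rightarrow> nat stream \<Rightarrow> nat \<Rightarrow> real \<Rightarrow> real" where
  "walk f \<omega> 0 = id"
| "walk f \<omega> (Suc n) = f (\<omega> !! n) \<circ> walk f \<omega> n"

definition phi_plus :: "nat pmf \<Rightarrow> (nat \<Rightarrow> real \<Rightarrow> real) \<Rightarrow> real \<Rightarrow> real" where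
  "phi_plus \<nu> f x = measure (stream_space (measure_pmf \<nu>))
     {\<omega> \<in> space (stream_space (measure_pmf \<nu>)).
        filterlim (\<lambda>n. walk f \<omega> n x) at_top sequentially}"

definition phi_minus :: "nat pmf \<Rightarrow> (nat \<Rightarrow> real \<Rightarrow> real) \<Rightarrow> real \<Rightarrow> real" where
  "phi_minus \<nu> f x = measure (stream_space (measure_pmf \<nu>))
     {\<omega> \<in> space (stream_space (measure_pmf \<nu>)).
        filterlim (\<lambda>n. walk f \<omega> n x) at_bot sequentially}"

definition shiftable :: "nat pmf \<Rightarrow> (nat \<Rightarrow> real \<Rightarrow> real) \<Rightarrow> bool" where
  "shiftable \<nu> f \<longleftrightarrow> (\<forall>x. \<exists>i\<in>set_pmf \<nu>. \<exists>j\<in>set_pmf \<nu>. f j x < x \<and> x < f i x)"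

end

theory Submission
  imports Defs
begin


abbreviation SS :: "nat pmf \<Rightarrow> nat stream measure" where
  "SS \<nu> \<equiv> stream_space (measure_pmf \<nu>)"

lemma sets_SS: "sets (SS \<nu>) = sets (stream_space (count_space UNIV))"
  by (rule sets_stream_space_cong) simp

lemma space_SS[simp]: "space (SS \<nu>) = UNIV"
  by (simp add: space_stream_space)

lemma prob_SS: "prob_space (SS \<nu>)"
  by (rule prob_space.prob_space_stream_space[OF prob_space_measure_pmf])

lemma stake_meas[measurable]: "stake n \<in> measurable (SS \<nu>) (count_space UNIV)"
  using measurable_stake[where 'a=nat] by (simp add: measurable_cong_sets[OF sets_SS refl])

lemma fun_stake_meas: "(\<lambda>\<omega>. g (stake n \<omega>)) \<in> measurable (SS \<nu>) N"
  if "g ` UNIV \<subseteq> space N"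
proof -
  have "g \<in> measurable (count_space UNIV) N" using that by (auto simp: measurable_def)
  then show ?thesis using measurable_compose[OF stake_meas] by blast
qed

lemma cyl_sets[measurable]: "{\<omega>. stake n \<omega> \<in> B} \<in> sets (SS \<nu>)"
proof -
  have "(\<lambda>\<omega>. stake n \<omega> \<in> B) \<in> measurable (SS \<nu>) (count_space UNIV)"
    by (rule fun_stake_meas) simp
  then show ?thesis by (simp add: pred_def)
qed

lemma walk_cong: "(\<And>k. k < n \<Longrightarrow> \<omega> !! k = \<omega>' !! k) \<Longrightarrow> walk f \<omega> n = walk f \<omega>' n"
  by (induction n) auto

lemma walk_stake: "m \<le> n \<Longrightarrow> walk f \<omega> m = walk f (stake n \<omega> @- sconst 0) m"
  by (rule walk_cong) (simp add: shift_snth)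

lemma walk_meas[measurable]: "(\<lambda>\<omega>. walk f \<omega> n x) \<in> borel_measurable (SS \<nu>)"
proof -
  have "(\<lambda>\<omega>. (\<lambda>l. walk f (l @- sconst 0) n x) (stake n \<omega>)) \<in> borel_measurable (SS \<nu>)"
    by (rule fun_stake_meas) simp
  moreover have "(\<lambda>\<omega>. walk f \<omega> n x) = (\<lambda>\<omega>. walk f (stake n \<omega> @- sconst 0) n x)"
    by (rule ext, rule fun_cong[OF walk_stake]) simp
  ultimately show ?thesis by simp
qed

lemma walk_shift: "walk f \<omega> (n + m) x = walk f (sdrop n \<omega>) m (walk f \<omega> n x)"
  by (induction m) (auto simp: sdrop_snth add.commute)

lemma walk_Cons: "walk f (i ## \<omega>) (Suc m) x = walk f \<omega> m (f i x)"
  using walk_shift[of f "i ## \<omega>" 1 m x] by simp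

lemma markov_set_meas:
  assumes "\<And>l. Y l \<in> sets (SS \<nu>)"
  shows "{\<omega>. stake n \<omega> \<in> B \<and> sdrop n \<omega> \<in> Y (stake n \<omega>)} \<in> sets (SS \<nu>)"
proof -
  have "Measurable.pred (SS \<nu>) (\<lambda>\<omega>. (\<lambda>l \<omega>. l \<in> B \<and> sdrop n \<omega> \<in> Y l) (stake n \<omega>) \<omega>)"
  proof (rule measurable_compose_countable[OF _ stake_meas])
    fix l
    have h: "sdrop n \<in> measurable (SS \<nu>) (SS \<nu>)" by measurable
    have "{\<omega>. sdrop n \<omega> \<in> Y l} \<in> sets (SS \<nu>)"
      using measurable_sets[OF h assms[of l]] by (simp add: vimage_def)
    then show "Measurable.pred (SS \<nu>) (\<lambda>\<omega>. l \<in> B \<and> sdrop n \<omega> \<in> Y l)"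
      by (cases "l \<in> B") (auto simp: pred_def)
  qed
  then show ?thesis by (simp add: pred_def)
qed

lemma markov_eq:
  assumes "\<And>l. Y l \<in> sets (SS \<nu>)"
  shows "emeasure (SS \<nu>) {\<omega>. stake n \<omega> \<in> B \<and> sdrop n \<omega> \<in> Y (stake n \<omega>)} =
    (\<integral>\<^sup>+\<omega>. indicator B (stake n \<omega>) * emeasure (SS \<nu>) (Y (stake n \<omega>)) \<partial>SS \<nu>)"
  using assms
proof (induction n arbitrary: B Y)
  case 0
  interpret P: prob_space "SS \<nu>" by (rule prob_SS)
  show ?case
    by (cases "[] \<in> B") (auto simp: P.emeasure_space_1[simplified])
next
  case (Suc n)
  have m: "{\<omega>. stake (Suc n) \<omega> \<in> B \<and> sdrop (Suc n) \<omega> \<in> Y (stake (Suc n) \<omega>)} \<in> sets (SS \<nu>)"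
    by (rule markov_set_meas) fact
  have "emeasure (SS \<nu>) {\<omega>. stake (Suc n) \<omega> \<in> B \<and> sdrop (Suc n) \<omega> \<in> Y (stake (Suc n) \<omega>)}
    = (\<integral>\<^sup>+t. emeasure (SS \<nu>) {x \<in> space (SS \<nu>). t ## x \<in> {\<omega>. stake (Suc n) \<omega> \<in> B \<and> sdrop (Suc n) \<omega> \<in> Y (stake (Suc n) \<omega>)}} \<partial>measure_pmf \<nu>)"
    by (rule prob_space.emeasure_stream_space[OF prob_space_measure_pmf m])
  also have "\<dots> = (\<integral>\<^sup>+t. emeasure (SS \<nu>) {x. stake n x \<in> {l. t # l \<in> B} \<and> sdrop n x \<in> (\<lambda>l. Y (t # l)) (stake n x)} \<partial>measure_pmf \<nu>)"
    by simp
  also have "\<dots> = (\<integral>\<^sup>+t. (\<integral>\<^sup>+x. indicator {l. t # l \<in> B} (stake n x) * emeasure (SS \<nu>) (Y (t # stake n x)) \<partial>SS \<nu>) \<partial>measure_pmf \<nu>)"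
    by (subst Suc.IH) (auto simp: Suc.prems)
  also have "\<dots> = (\<integral>\<^sup>+\<omega>. indicator B (stake (Suc n) \<omega>) * emeasure (SS \<nu>) (Y (stake (Suc n) \<omega>)) \<partial>SS \<nu>)"
  proof -
    let ?g = "\<lambda>\<omega>. indicator B (stake (Suc n) \<omega>) * emeasure (SS \<nu>) (Y (stake (Suc n) \<omega>))"
    have gm: "?g \<in> borel_measurable (SS \<nu>)" by (rule fun_stake_meas) simp
    have "(\<integral>\<^sup>+\<omega>. ?g \<omega> \<partial>SS \<nu>) = (\<integral>\<^sup>+t. (\<integral>\<^sup>+x. ?g (t ## x) \<partial>SS \<nu>) \<partial>measure_pmf \<nu>)"
      by (rule prob_space.nn_integral_stream_space[OF prob_space_measure_pmf gm])
    then show ?thesis by (auto intro!: nn_integral_cong simp: indicator_def)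
  qed
  finally show ?case .
qed

lemma markov_le:
  assumes "\<And>l. Y l \<in> sets (SS \<nu>)" and "\<And>l. l \<in> B \<Longrightarrow> emeasure (SS \<nu>) (Y l) \<le> c"
  shows "emeasure (SS \<nu>) {\<omega>. stake n \<omega> \<in> B \<and> sdrop n \<omega> \<in> Y (stake n \<omega>)} \<le>
    c * emeasure (SS \<nu>) {\<omega>. stake n \<omega> \<in> B}"
proof -
  have "emeasure (SS \<nu>) {\<omega>. stake n \<omega> \<in> B \<and> sdrop n \<omega> \<in> Y (stake n \<omega>)} =
    (\<integral>\<^sup>+\<omega>. indicator B (stake n \<omega>) * emeasure (SS \<nu>) (Y (stake n \<omega>)) \<partial>SS \<nu>)"
    by (rule markov_eq) fact
  also have "\<dots> \<le> (\<integral>\<^sup>+\<omega>. c * indicator {\<omega>. stake n \<omega> \<in> B} \<omega> \<partial>SS \<nu>)"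
    using assms(2) by (intro nn_integral_mono) (auto simp: indicator_def)
  also have "\<dots> = c * emeasure (SS \<nu>) {\<omega>. stake n \<omega> \<in> B}"
    by (rule nn_integral_cmult_indicator) simp
  finally show ?thesis .
qed



definition cyl :: "nat \<Rightarrow> nat list set \<Rightarrow> nat stream set" where
  "cyl N B = {\<omega>. stake N \<omega> \<in> B}"

lemma cyl_lift: "N \<le> N' \<Longrightarrow> cyl N B = cyl N' {l. take N l \<in> B}"
  by (auto simp: cyl_def take_stake min_absorb1)

lemma sets_SS_sigma: "sets (SS \<nu>) \<subseteq> sigma_sets UNIV (range (\<lambda>(N, B). cyl N B))"
proof -
  have "sets (SS \<nu>) = sigma_sets (streams (UNIV::nat set)) (sstart UNIV ` lists UNIV \<union> {{}})"
    unfolding sets_SS sets_stream_space_sstart[OF countableI_type, simplified]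
    by (subst sets_measure_of) (auto simp: sstart_in_streams)
  also have "\<dots> = sigma_sets UNIV (sstart UNIV ` lists UNIV \<union> {{}})" by simp
  also have "\<dots> \<subseteq> sigma_sets UNIV (range (\<lambda>(N, B). cyl N B))"
  proof (rule sigma_sets_mono', safe)
    fix xs :: "nat list"
    have "sstart UNIV xs = cyl (length xs) {xs}"
      by (auto simp: cyl_def sstart_eq list_eq_iff_nth_eq)
    then show "sstart UNIV xs \<in> range (\<lambda>(N, B). cyl N B)" by auto
  next
    show "{} \<in> range (\<lambda>(N, B). cyl N B)"
      by (rule image_eqI[of _ _ "(0, {})"]) (auto simp: cyl_def)
  qed
  finally show ?thesis by simp
qed

lemma cyl_meas[measurable]: "cyl N B \<in> sets (SS \<nu>)"
  unfolding cyl_def by (rule cyl_sets)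

lemma approx_cyl:
  assumes "A \<in> sets (SS \<nu>)" "e > 0"
  shows "\<exists>N B. measure (SS \<nu>) ((A - cyl N B) \<union> (cyl N B - A)) < e"
proof -
  interpret P: prob_space "SS \<nu>" by (rule prob_SS)
  let ?G = "range (\<lambda>(N, B). cyl N B)"
  have G: "?G \<subseteq> sets (SS \<nu>)" by auto
  have Gsub: "sigma_sets UNIV ?G \<subseteq> sets (SS \<nu>)"
    using sets.sigma_sets_subset[OF G] by simp
  have IntS: "Int_stable ?G"
  proof (rule Int_stableI, safe)
    fix N B N' B'
    show "cyl N B \<inter> cyl N' B' \<in> ?G"
      using cyl_lift[of N "max N N'" B] cyl_lift[of N' "max N N'" B']
      by (rule_tac image_eqI[of _ _ "(max N N', {l. take N l \<in> B} \<inter> {l. take N' l \<in> B'})"])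
         (auto simp: cyl_def)
  qed
  have Gpow: "?G \<subseteq> Pow UNIV" by simp
  have Asig: "A \<in> sigma_sets UNIV ?G" using assms(1) sets_SS_sigma by blast
  have "\<forall>e>0. \<exists>N B. measure (SS \<nu>) ((A - cyl N B) \<union> (cyl N B - A)) < e"
    using IntS Gpow Asig
  proof (induction A rule: sigma_sets_induct_disjoint)
    case (basic A)
    then obtain N B where "A = cyl N B" by auto
    then show ?case by (intro allI impI exI[of _ N] exI[of _ B]) auto
  next
    case empty
    show ?case by (intro allI impI exI[of _ 0] exI[of _ "{}"]) (auto simp: cyl_def)
  next
    case (compl A)
    show ?case
    proof (intro allI impI)
    fix e :: real assume "e > 0"
    with compl(2) obtain N B where "measure (SS \<nu>) ((A - cyl N B) \<union> (cyl N B - A)) < e" by blast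
    moreover have "((UNIV - A) - cyl N (-B)) \<union> (cyl N (-B) - (UNIV - A)) = (A - cyl N B) \<union> (cyl N B - A)"
      by (auto simp: cyl_def)
    ultimately show "\<exists>N B. measure (SS \<nu>) (((UNIV - A) - cyl N B) \<union> (cyl N B - (UNIV - A))) < e"
      by (intro exI[of _ N] exI[of _ "-B"]) simp
    qed
  next
    case (union A)
    have Am: "\<And>i. A i \<in> sets (SS \<nu>)" using union(2) Gsub by blast
    let ?U = "\<Union>i. A i"
    show ?case
    proof (intro allI impI)
    fix e :: real assume e: "e > 0"
    let ?UK = "\<lambda>K. \<Union>i<K. A i"
    have "(\<lambda>K. measure (SS \<nu>) (?UK K)) \<longlonglongrightarrow> measure (SS \<nu>) (\<Union>K. ?UK K)"
    proof (rule P.finite_Lim_measure_incseq)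
      show "range ?UK \<subseteq> sets (SS \<nu>)" using Am by (auto intro!: sets.finite_UN)
      show "incseq ?UK" by (rule monoI, rule UN_mono) auto
    qed
    moreover have "(\<Union>K. ?UK K) = ?U" by blast
    ultimately have "(\<lambda>K. measure (SS \<nu>) (?UK K)) \<longlonglongrightarrow> measure (SS \<nu>) ?U" by simp
    from this[unfolded lim_sequentially, rule_format, of "e/2"] e
    obtain K where K: "dist (measure (SS \<nu>) (?UK K)) (measure (SS \<nu>) ?U) < e / 2"
      by auto
    have "\<forall>i. \<exists>NB. measure (SS \<nu>) ((A i - cyl (fst NB) (snd NB)) \<union> (cyl (fst NB) (snd NB) - A i)) < e / (2 * (real K + 1))"
    proof
      fix i
      have "e / (2 * (real K + 1)) > 0" using e by simp
      then obtain N B where "measure (SS \<nu>) ((A i - cyl N B) \<union> (cyl N B - A i)) < e / (2 * (real K + 1))"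
        using union(3)[of i] by blast
      then show "\<exists>NB. measure (SS \<nu>) ((A i - cyl (fst NB) (snd NB)) \<union> (cyl (fst NB) (snd NB) - A i)) < e / (2 * (real K + 1))"
        by (intro exI[of _ "(N, B)"]) simp
    qed
    from choice[OF this] obtain NB where NB0: "\<forall>i. measure (SS \<nu>) ((A i - cyl (fst (NB i)) (snd (NB i))) \<union> (cyl (fst (NB i)) (snd (NB i)) - A i)) < e / (2 * (real K + 1))"
      by blast
    note NB = NB0[rule_format]
    define N where "N = Max ((\<lambda>i. fst (NB i)) ` {..<K})"
    define C where "C i = cyl (fst (NB i)) (snd (NB i))" for i
    define B where "B = {l. \<exists>i<K. take (fst (NB i)) l \<in> snd (NB i)}"
    have eqC: "cyl N B = (\<Union>i<K. C i)"
    proof -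
      have "\<And>i. i < K \<Longrightarrow> fst (NB i) \<le> N" unfolding N_def by (intro Max_ge) auto
      then have "\<And>i. i < K \<Longrightarrow> C i = cyl N {l. take (fst (NB i)) l \<in> snd (NB i)}"
        unfolding C_def by (intro cyl_lift)
      then show ?thesis by (auto simp: cyl_def B_def)
    qed
    have Cm: "\<And>i. C i \<in> sets (SS \<nu>)" by (simp add: C_def)
    have Um: "?U \<in> sets (SS \<nu>)" using Am by (intro sets.countable_UN) auto
    have UKm: "?UK K \<in> sets (SS \<nu>)" using Am by (intro sets.finite_UN) auto
    have Dm: "(\<Union>i<K. (A i - C i) \<union> (C i - A i)) \<in> sets (SS \<nu>)"
      using Am Cm by (intro sets.finite_UN) auto
    have Em: "(?U - ?UK K) \<union> (\<Union>i<K. (A i - C i) \<union> (C i - A i)) \<in> sets (SS \<nu>)"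
      by (intro sets.Un sets.Diff Um UKm Dm)
    have sub: "(?U - cyl N B) \<union> (cyl N B - ?U) \<subseteq>
        (?U - ?UK K) \<union> (\<Union>i<K. (A i - C i) \<union> (C i - A i))"
      unfolding eqC by auto
    have h1: "measure (SS \<nu>) ((?U - cyl N B) \<union> (cyl N B - ?U)) \<le>
        measure (SS \<nu>) ((?U - ?UK K) \<union> (\<Union>i<K. (A i - C i) \<union> (C i - A i)))"
      by (rule P.finite_measure_mono[OF sub Em])
    have h2: "measure (SS \<nu>) ((?U - ?UK K) \<union> (\<Union>i<K. (A i - C i) \<union> (C i - A i))) \<le> measure (SS \<nu>) (?U - ?UK K) + measure (SS \<nu>) (\<Union>i<K. (A i - C i) \<union> (C i - A i))"
      using Um UKm Dm by (intro measure_Un_le) blast+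
    have h3: "measure (SS \<nu>) (\<Union>i<K. (A i - C i) \<union> (C i - A i)) \<le> (\<Sum>i<K. measure (SS \<nu>) ((A i - C i) \<union> (C i - A i)))"
      using Am Cm by (intro P.finite_measure_subadditive_finite) auto
    have h4: "(\<Sum>i<K. measure (SS \<nu>) ((A i - C i) \<union> (C i - A i))) \<le> (\<Sum>i<K. e / (2 * (real K + 1)))"
      by (intro sum_mono less_imp_le) (unfold C_def, rule NB)
    have h5: "(\<Sum>i<K. e / (2 * (real K + 1))) \<le> e / 2"
      using e by (simp add: field_simps)
    have h6: "measure (SS \<nu>) (?U - ?UK K) = measure (SS \<nu>) ?U - measure (SS \<nu>) (?UK K)"
      by (rule P.finite_measure_Diff) (auto simp: Am)
    have h7: "measure (SS \<nu>) ?U - measure (SS \<nu>) (?UK K) < e / 2"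
    proof -
      have "measure (SS \<nu>) (?UK K) \<le> measure (SS \<nu>) ?U"
        by (rule P.finite_measure_mono) (auto simp: Am)
      then show ?thesis using K by (simp add: dist_real_def)
    qed
    have "measure (SS \<nu>) ((?U - cyl N B) \<union> (cyl N B - ?U)) < e"
      using h1 h2 h3 h4 h5 h6 h7 by linarith
    then show "\<exists>N B. measure (SS \<nu>) ((?U - cyl N B) \<union> (cyl N B - ?U)) < e" by blast
    qed
  qed
  then show ?thesis using assms(2) by blast
qed



lemma filterlim_shift_nat:
  "filterlim (\<lambda>n. g (n + k)) F sequentially \<longleftrightarrow> filterlim g F sequentially"
proof (induction k)
  case (Suc k)
  have "filterlim (\<lambda>n. g (n + Suc k)) F sequentially \<longleftrightarrow> filterlim (\<lambda>n. (\<lambda>m. g (m + k)) (Suc n)) F sequentially"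
    by simp
  also have "\<dots> \<longleftrightarrow> filterlim (\<lambda>m. g (m + k)) F sequentially"
    by (rule filterlim_sequentially_Suc)
  finally show ?case using Suc by simp
qed simp

definition Aset :: "(nat \<Rightarrow> real \<Rightarrow> real) \<Rightarrow> real \<Rightarrow> nat stream set" where
  "Aset f y = {\<omega>. filterlim (\<lambda>n. walk f \<omega> n y) at_top sequentially}"

definition Bset :: "(nat \<Rightarrow> real \<Rightarrow> real) \<Rightarrow> real \<Rightarrow> nat stream set" where
  "Bset f y = {\<omega>. filterlim (\<lambda>n. walk f \<omega> n y) at_bot sequentially}"

lemma phi_plus_Aset: "phi_plus \<nu> f y = measure (SS \<nu>) (Aset f y)"
  by (simp add: phi_plus_def Aset_def)

lemma phi_minus_Bset: "phi_minus \<nu> f y = measure (SS \<nu>) (Bset f y)"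
  by (simp add: phi_minus_def Bset_def)

lemma at_top_nat_iff:
  fixes g :: "nat \<Rightarrow> real"
  shows "filterlim g at_top sequentially \<longleftrightarrow> (\<forall>m::nat. \<exists>N. \<forall>n\<ge>N. real m \<le> g n)"
proof
  assume "filterlim g at_top sequentially"
  then show "\<forall>m::nat. \<exists>N. \<forall>n\<ge>N. real m \<le> g n"
    by (auto simp: filterlim_at_top eventually_sequentially)
next
  assume h: "\<forall>m::nat. \<exists>N. \<forall>n\<ge>N. real m \<le> g n"
  show "filterlim g at_top sequentially"
    unfolding filterlim_at_top eventually_sequentially
  proof
    fix Z :: real
    obtain m :: nat where "Z \<le> real m" using real_arch_simple by blast
    with h show "\<exists>N. \<forall>n\<ge>N. Z \<le> g n" by (meson order_trans)
  qed
qed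

lemma at_bot_nat_iff:
  fixes g :: "nat \<Rightarrow> real"
  shows "filterlim g at_bot sequentially \<longleftrightarrow> (\<forall>m::nat. \<exists>N. \<forall>n\<ge>N. g n \<le> - real m)"
proof
  assume "filterlim g at_bot sequentially"
  then show "\<forall>m::nat. \<exists>N. \<forall>n\<ge>N. g n \<le> - real m"
    by (auto simp: filterlim_at_bot eventually_sequentially)
next
  assume h: "\<forall>m::nat. \<exists>N. \<forall>n\<ge>N. g n \<le> - real m"
  show "filterlim g at_bot sequentially"
    unfolding filterlim_at_bot eventually_sequentially
  proof
    fix Z :: real
    obtain m :: nat where "- Z \<le> real m" using real_arch_simple by blast
    with h show "\<exists>N. \<forall>n\<ge>N. g n \<le> Z" by (smt (verit))
  qed
qed

lemma Aset_meas[measurable]: "Aset f y \<in> sets (SS \<nu>)"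
proof -
  have "Aset f y = {\<omega>\<in>space (SS \<nu>). \<forall>m::nat. \<exists>N. \<forall>n\<ge>N. real m \<le> walk f \<omega> n y}"
    by (simp add: Aset_def at_top_nat_iff)
  also have "\<dots> \<in> sets (SS \<nu>)" by measurable
  finally show ?thesis .
qed

lemma Bset_meas[measurable]: "Bset f y \<in> sets (SS \<nu>)"
proof -
  have "Bset f y = {\<omega>\<in>space (SS \<nu>). \<forall>m::nat. \<exists>N. \<forall>n\<ge>N. walk f \<omega> n y \<le> - real m}"
    by (simp add: Bset_def at_bot_nat_iff)
  also have "\<dots> \<in> sets (SS \<nu>)" by measurable
  finally show ?thesis .
qed

lemma Aset_shift: "\<omega> \<in> Aset f y \<longleftrightarrow> sdrop n \<omega> \<in> Aset f (walk f \<omega> n y)"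
proof -
  have "filterlim (\<lambda>m. walk f (sdrop n \<omega>) m (walk f \<omega> n y)) at_top sequentially \<longleftrightarrow>
        filterlim (\<lambda>m. walk f \<omega> (m + n) y) at_top sequentially"
  proof -
    have "\<And>m. walk f \<omega> (m + n) y = walk f (sdrop n \<omega>) m (walk f \<omega> n y)"
      using walk_shift[of f \<omega> n] by (simp add: add.commute)
    then show ?thesis by simp
  qed
  also have "\<dots> \<longleftrightarrow> filterlim (\<lambda>m. walk f \<omega> m y) at_top sequentially"
    by (rule filterlim_shift_nat)
  finally show ?thesis by (simp add: Aset_def)
qed

lemma phi_plus_step:
  "phi_plus \<nu> f y \<ge> pmf \<nu> i * phi_plus \<nu> f (f i y)"
proof -
  interpret P: prob_space "SS \<nu>" by (rule prob_SS)
  have "emeasure (SS \<nu>) (Aset f y) = (\<integral>\<^sup>+t. emeasure (SS \<nu>) {x \<in> space (SS \<nu>). t ## x \<in> Aset f y} \<partial>measure_pmf \<nu>)"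
    by (rule prob_space.emeasure_stream_space[OF prob_space_measure_pmf Aset_meas])
  also have "\<dots> = (\<integral>\<^sup>+t. emeasure (SS \<nu>) (Aset f (f t y)) \<partial>measure_pmf \<nu>)"
  proof (rule nn_integral_cong)
    fix t
    have "{x \<in> space (SS \<nu>). t ## x \<in> Aset f y} = Aset f (f t y)"
      using Aset_shift[of "t ## _" f y 1] by auto
    then show "emeasure (SS \<nu>) {x \<in> space (SS \<nu>). t ## x \<in> Aset f y} = emeasure (SS \<nu>) (Aset f (f t y))"
      by simp
  qed
  also have "\<dots> \<ge> (\<integral>\<^sup>+t. emeasure (SS \<nu>) (Aset f (f i y)) * indicator {i} t \<partial>measure_pmf \<nu>)"
    by (intro nn_integral_mono) (auto simp: indicator_def)
  also have "(\<integral>\<^sup>+t. emeasure (SS \<nu>) (Aset f (f i y)) * indicator {i} t \<partial>measure_pmf \<nu>) =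
      emeasure (SS \<nu>) (Aset f (f i y)) * pmf \<nu> i"
    by (simp add: nn_integral_cmult_indicator emeasure_pmf_single)
  finally have "ennreal (measure (SS \<nu>) (Aset f (f i y)) * pmf \<nu> i) \<le> ennreal (measure (SS \<nu>) (Aset f y))"
    by (simp add: P.emeasure_eq_measure ennreal_mult)
  then show ?thesis
    by (simp add: phi_plus_Aset mult.commute ennreal_le_iff)
qed

lemma walk_mono:
  assumes "\<And>k. k < n \<Longrightarrow> mono (f (\<omega> !! k))" "x \<le> y"
  shows "walk f \<omega> n x \<le> walk f \<omega> n y"
  using assms by (induction n) (auto simp: mono_def)

lemma phi_plus_mono:
  assumes "\<And>i. i \<in> set_pmf \<nu> \<Longrightarrow> mono (f i)" "x \<le> y"
  shows "phi_plus \<nu> f x \<le> phi_plus \<nu> f y"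
proof -
  interpret P: prob_space "SS \<nu>" by (rule prob_SS)
  have "AE \<omega> in SS \<nu>. stream_all (\<lambda>i. i \<in> set_pmf \<nu>) \<omega>"
    by (rule prob_space.AE_stream_all[OF prob_space_measure_pmf]) (auto simp: AE_measure_pmf)
  then have "AE \<omega> in SS \<nu>. \<omega> \<in> Aset f x \<longrightarrow> \<omega> \<in> Aset f y"
  proof (rule AE_mp, intro AE_I2 impI)
    fix \<omega> assume "stream_all (\<lambda>i. i \<in> set_pmf \<nu>) \<omega>" "\<omega> \<in> Aset f x"
    then have m: "\<And>n. walk f \<omega> n x \<le> walk f \<omega> n y"
      using assms by (intro walk_mono) (auto simp: stream_all_def)
    from \<open>\<omega> \<in> Aset f x\<close> show "\<omega> \<in> Aset f y"
      unfolding Aset_def using m by (auto intro: filterlim_at_top_mono)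
  qed
  then have "emeasure (SS \<nu>) (Aset f x) \<le> emeasure (SS \<nu>) (Aset f y)"
    by (rule emeasure_mono_AE) simp
  then show ?thesis by (simp add: phi_plus_Aset P.emeasure_eq_measure)
qed



lemma key_null:
  fixes M \<delta> z :: real
  assumes Gm: "\<And>y. Gs y \<in> sets (SS \<nu>)"
    and inv: "\<And>\<omega> n. \<omega> \<in> Gs z \<longleftrightarrow> sdrop n \<omega> \<in> Gs (walk f \<omega> n z)"
    and bound: "\<And>y. M \<le> y \<Longrightarrow> measure (SS \<nu>) (Gs y) \<le> 1 - \<delta>"
    and dpos: "\<delta> > 0"
  shows "measure (SS \<nu>) (Gs z \<inter> {\<omega>. \<forall>N. \<exists>n\<ge>N. M \<le> walk f \<omega> n z}) = 0"
proof -
  interpret P: prob_space "SS \<nu>" by (rule prob_SS)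
  define G where "G = Gs z"
  define D where "D = {\<omega>. \<forall>N. \<exists>n\<ge>N. M \<le> walk f \<omega> n z}"
  have d1: "\<delta> \<le> 1" using bound[of M] measure_nonneg[of "SS \<nu>" "Gs M"] by linarith
  have Gmeas: "G \<in> sets (SS \<nu>)" unfolding G_def by (rule Gm)
  have Dmeas: "D \<in> sets (SS \<nu>)"
  proof -
    have "D = {\<omega>\<in>space (SS \<nu>). \<forall>N. \<exists>n\<ge>N. M \<le> walk f \<omega> n z}" by (simp add: D_def)
    also have "\<dots> \<in> sets (SS \<nu>)" by measurable
    finally show ?thesis .
  qed
  have main: "\<delta> * measure (SS \<nu>) (G \<inter> D) < \<epsilon>" if eps: "\<epsilon> > 0" for \<epsilon>
  proof -
    obtain N B where NB: "measure (SS \<nu>) ((G - cyl N B) \<union> (cyl N B - G)) < \<epsilon>"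
      using approx_cyl[OF Gmeas eps] by blast
    define H where "H = cyl N B"
    have Hmeas: "H \<in> sets (SS \<nu>)" by (simp add: H_def)
    define w where "w \<omega> n = walk f \<omega> n z" for \<omega> n
    define K where "K n = {\<omega>. N \<le> n \<and> M \<le> w \<omega> n \<and> (\<forall>j. N \<le> j \<and> j < n \<longrightarrow> w \<omega> j < M)}" for n
    define BK where "BK n = {l. N \<le> n \<and> M \<le> walk f (l @- sconst 0) n z \<and>
        (\<forall>j. N \<le> j \<and> j < n \<longrightarrow> walk f (l @- sconst 0) j z < M)}" for n
    have Kcyl: "K n = cyl n (BK n)" for n
    proof -
      have e: "\<And>\<omega> j. j \<le> n \<Longrightarrow> w \<omega> j = walk f (stake n \<omega> @- sconst 0) j z"
        unfolding w_def by (rule fun_cong[OF walk_stake])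
      have "\<And>\<omega>. (N \<le> n \<and> M \<le> w \<omega> n \<and> (\<forall>j. N \<le> j \<and> j < n \<longrightarrow> w \<omega> j < M)) \<longleftrightarrow>
          (N \<le> n \<and> M \<le> walk f (stake n \<omega> @- sconst 0) n z \<and>
          (\<forall>j. N \<le> j \<and> j < n \<longrightarrow> walk f (stake n \<omega> @- sconst 0) j z < M))"
        using e[OF order_refl] e[OF less_imp_le] by auto
      then show ?thesis unfolding K_def BK_def cyl_def by blast
    qed
    have Kmeas: "K n \<in> sets (SS \<nu>)" for n by (simp add: Kcyl)
    have Kdisj: "disjoint_family K"
    unfolding disjoint_family_on_def
    proof (intro ballI impI)
      fix m n :: nat assume "m \<noteq> n"
      show "K m \<inter> K n = {}"
      proof (cases "m < n")
        case True then show ?thesis by (auto simp: K_def)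
      next
        case False then have "n < m" using \<open>m \<noteq> n\<close> by simp
        then show ?thesis by (auto simp: K_def)
      qed
    qed
    define U where "U = (\<Union>n. K n)"
    have DU: "D \<subseteq> U"
    proof
      fix \<omega> assume "\<omega> \<in> D"
      then obtain n where n: "N \<le> n" "M \<le> w \<omega> n" by (auto simp: D_def w_def)
      define n0 where "n0 = (LEAST n. N \<le> n \<and> M \<le> w \<omega> n)"
      have "N \<le> n0 \<and> M \<le> w \<omega> n0" unfolding n0_def by (rule LeastI[of _ n]) (use n in auto)
      moreover have "w \<omega> j < M" if "N \<le> j \<and> j < n0" for j
      proof -
        have "\<not> (N \<le> j \<and> M \<le> w \<omega> j)"
          using not_less_Least[of j "\<lambda>n. N \<le> n \<and> M \<le> w \<omega> n"] that unfolding n0_def by blast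
        then show ?thesis using that by simp
      qed
      ultimately have "\<omega> \<in> K n0" by (auto simp: K_def)
      then show "\<omega> \<in> U" by (auto simp: U_def)
    qed
    have sums: "(\<lambda>n. measure (SS \<nu>) (X \<inter> K n)) sums measure (SS \<nu>) (X \<inter> U)"
      if "X \<in> sets (SS \<nu>)" for X
    proof -
      have "(\<lambda>n. measure (SS \<nu>) (X \<inter> K n)) sums measure (SS \<nu>) (\<Union>n. X \<inter> K n)"
        using that Kmeas Kdisj
        by (intro measure_UNION) (auto simp: disjoint_family_on_def P.emeasure_eq_measure)
      moreover have "(\<Union>n. X \<inter> K n) = X \<inter> U" by (auto simp: U_def)
      ultimately show ?thesis by simp
    qed
    have step: "measure (SS \<nu>) (G \<inter> K n) \<le> (1 - \<delta>) * measure (SS \<nu>) (H \<inter> K n) + measure (SS \<nu>) ((G - H) \<inter> K n)" for n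
    proof (cases "N \<le> n")
      case False
      then have "K n = {}" by (auto simp: K_def)
      then show ?thesis by simp
    next
      case True
      define B' where "B' = {l. take N l \<in> B} \<inter> BK n"
      have HK: "H \<inter> K n = cyl n B'"
        unfolding H_def Kcyl B'_def using cyl_lift[OF True, of B] by (auto simp: cyl_def)
      have GHK: "G \<inter> H \<inter> K n = {\<omega>. stake n \<omega> \<in> B' \<and> sdrop n \<omega> \<in> (\<lambda>l. Gs (walk f (l @- sconst 0) n z)) (stake n \<omega>)}"
      proof -
        have "\<omega> \<in> G \<longleftrightarrow> sdrop n \<omega> \<in> Gs (walk f (stake n \<omega> @- sconst 0) n z)" for \<omega>
        proof -
          have eqw: "walk f \<omega> n z = walk f (stake n \<omega> @- sconst 0) n z"
            by (rule fun_cong[OF walk_stake]) simp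
          show ?thesis unfolding G_def eqw[symmetric] by (rule inv)
        qed
        then show ?thesis using HK by (auto simp: cyl_def)
      qed
      have "emeasure (SS \<nu>) (G \<inter> H \<inter> K n) \<le> ennreal (1 - \<delta>) * emeasure (SS \<nu>) {\<omega>. stake n \<omega> \<in> B'}"
        unfolding GHK
      proof (rule markov_le)
        fix l show "Gs (walk f (l @- sconst 0) n z) \<in> sets (SS \<nu>)" by (rule Gm)
      next
        fix l assume "l \<in> B'"
        then have "M \<le> walk f (l @- sconst 0) n z" by (auto simp: B'_def BK_def)
        then have "measure (SS \<nu>) (Gs (walk f (l @- sconst 0) n z)) \<le> 1 - \<delta>" by (rule bound)
        then show "emeasure (SS \<nu>) (Gs (walk f (l @- sconst 0) n z)) \<le> ennreal (1 - \<delta>)"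
          by (simp add: P.emeasure_eq_measure ennreal_leI)
      qed
      also have "{\<omega>. stake n \<omega> \<in> B'} = H \<inter> K n" using HK by (simp add: cyl_def)
      finally have "ennreal (measure (SS \<nu>) (G \<inter> H \<inter> K n)) \<le> ennreal ((1 - \<delta>) * measure (SS \<nu>) (H \<inter> K n))"
        using d1 by (simp add: P.emeasure_eq_measure ennreal_mult)
      then have a: "measure (SS \<nu>) (G \<inter> H \<inter> K n) \<le> (1 - \<delta>) * measure (SS \<nu>) (H \<inter> K n)"
        using d1 by (simp add: ennreal_le_iff)
      have "measure (SS \<nu>) (G \<inter> K n) \<le> measure (SS \<nu>) ((G \<inter> H \<inter> K n) \<union> ((G - H) \<inter> K n))"
        using Gmeas Hmeas Kmeas by (intro P.finite_measure_mono) auto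
      also have "\<dots> \<le> measure (SS \<nu>) (G \<inter> H \<inter> K n) + measure (SS \<nu>) ((G - H) \<inter> K n)"
        using Gmeas Hmeas Kmeas by (intro measure_Un_le) auto
      finally show ?thesis using a by linarith
    qed
    have s1: "(\<lambda>n. measure (SS \<nu>) (G \<inter> K n)) sums measure (SS \<nu>) (G \<inter> U)"
      using Gmeas by (rule sums)
    have s2: "(\<lambda>n. (1 - \<delta>) * measure (SS \<nu>) (H \<inter> K n) + measure (SS \<nu>) ((G - H) \<inter> K n)) sums
        ((1 - \<delta>) * measure (SS \<nu>) (H \<inter> U) + measure (SS \<nu>) ((G - H) \<inter> U))"
      using Hmeas Gmeas by (intro sums_add sums_mult sums) auto
    have X: "measure (SS \<nu>) (G \<inter> U) \<le> (1 - \<delta>) * measure (SS \<nu>) (H \<inter> U) + measure (SS \<nu>) ((G - H) \<inter> U)"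
      using sums_le[OF _ s1 s2] step by blast
    have Umeas: "U \<in> sets (SS \<nu>)" using Kmeas by (auto simp: U_def)
    have HU: "measure (SS \<nu>) (H \<inter> U) \<le> measure (SS \<nu>) (G \<inter> U) + measure (SS \<nu>) (H - G)"
    proof -
      have "measure (SS \<nu>) (H \<inter> U) \<le> measure (SS \<nu>) ((G \<inter> U) \<union> (H - G))"
        using Gmeas Hmeas Umeas by (intro P.finite_measure_mono) auto
      also have "\<dots> \<le> measure (SS \<nu>) (G \<inter> U) + measure (SS \<nu>) (H - G)"
        using Gmeas Hmeas Umeas by (intro measure_Un_le) auto
      finally show ?thesis .
    qed
    have GHU: "measure (SS \<nu>) ((G - H) \<inter> U) \<le> measure (SS \<nu>) (G - H)"
      using Gmeas Hmeas by (intro P.finite_measure_mono) auto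
    have sd: "measure (SS \<nu>) (G - H) + measure (SS \<nu>) (H - G) < \<epsilon>"
    proof -
      have "measure (SS \<nu>) ((G - H) \<union> (H - G)) = measure (SS \<nu>) (G - H) + measure (SS \<nu>) (H - G)"
        using Gmeas Hmeas by (intro P.finite_measure_Union) auto
      then show ?thesis using NB by (simp add: H_def)
    qed
    have nn: "0 \<le> measure (SS \<nu>) (H - G)" by simp
    have "(1 - \<delta>) * measure (SS \<nu>) (H \<inter> U) \<le> (1 - \<delta>) * (measure (SS \<nu>) (G \<inter> U) + measure (SS \<nu>) (H - G))"
      using HU d1 by (intro mult_left_mono) auto
    moreover have "(1 - \<delta>) * measure (SS \<nu>) (H - G) \<le> measure (SS \<nu>) (H - G)"
      using nn dpos by (simp add: algebra_simps)
    ultimately have c1: "\<delta> * measure (SS \<nu>) (G \<inter> U) < \<epsilon>"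
      using X GHU sd by (simp add: algebra_simps)
    have c2: "measure (SS \<nu>) (G \<inter> D) \<le> measure (SS \<nu>) (G \<inter> U)"
      using DU Gmeas Umeas by (intro P.finite_measure_mono) auto
    show ?thesis using mult_left_mono[OF c2 less_imp_le[OF dpos]] c1 by linarith
  qed
  have "measure (SS \<nu>) (G \<inter> D) \<le> 0"
  proof (rule ccontr)
    assume "\<not> ?thesis"
    then have "\<delta> * measure (SS \<nu>) (G \<inter> D) > 0" using dpos by simp
    from main[OF this] show False by simp
  qed
  then show ?thesis using measure_nonneg[of "SS \<nu>" "G \<inter> D"] unfolding G_def D_def by linarith
qed



lemma AB_disj: "Aset f y \<inter> Bset f y = {}"
proof (safe)
  fix \<omega> assume a: "\<omega> \<in> Aset f y" and b: "\<omega> \<in> Bset f y"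
  from a obtain N1 where N1: "\<And>n. n \<ge> N1 \<Longrightarrow> real 1 \<le> walk f \<omega> n y"
    unfolding Aset_def at_top_nat_iff by blast
  from b obtain N2 where N2: "\<And>n. n \<ge> N2 \<Longrightarrow> walk f \<omega> n y \<le> - real 1"
    unfolding Bset_def at_bot_nat_iff by blast
  from N1[of "max N1 N2"] N2[of "max N1 N2"] show "\<omega> \<in> {}" by simp
qed

lemma main_dir:
  assumes mono: "\<And>i. i \<in> set_pmf \<nu> \<Longrightarrow> strict_mono (f i)"
    and cont: "\<And>i. i \<in> set_pmf \<nu> \<Longrightarrow> continuous_on UNIV (f i)"
    and sh: "shiftable \<nu> f"
    and pos: "phi_plus \<nu> f x0 > 0"
  shows "phi_plus \<nu> f z + phi_minus \<nu> f z = 1"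
proof -
  interpret P: prob_space "SS \<nu>" by (rule prob_SS)
  have mono': "\<And>i. i \<in> set_pmf \<nu> \<Longrightarrow> mono (f i)" using mono by (simp add: strict_mono_mono)
  have pm: "\<And>x y. x \<le> y \<Longrightarrow> phi_plus \<nu> f x \<le> phi_plus \<nu> f y"
    by (rule phi_plus_mono[OF mono'])
  have allpos: "phi_plus \<nu> f y > 0" for y
  proof (rule ccontr)
    assume "\<not> phi_plus \<nu> f y > 0"
    then have y1: "phi_plus \<nu> f y \<le> 0" by simp
    define Pset where "Pset = {x. phi_plus \<nu> f x > 0}"
    have ne: "Pset \<noteq> {}" using pos by (auto simp: Pset_def)
    have lb: "y \<le> x" if "x \<in> Pset" for x
    proof (rule ccontr)
      assume "\<not> y \<le> x"
      then have "phi_plus \<nu> f x \<le> phi_plus \<nu> f y" by (intro pm) simp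
      with y1 that show False by (simp add: Pset_def)
    qed
    have bdd: "bdd_below Pset" using lb by (auto simp: bdd_below_def)
    define a where "a = Inf Pset"
    obtain i where i: "i \<in> set_pmf \<nu>" "a < f i a" using sh unfolding shiftable_def by blast
    obtain y' where y': "y' \<in> Pset" "y' < f i a"
      using i(2) cInf_less_iff[OF ne bdd] unfolding a_def by blast
    have "isCont (f i) a" using cont[OF i(1)] by (simp add: continuous_on_eq_continuous_at)
    then have "f i \<midarrow>a\<rightarrow> f i a" by (simp add: isCont_def)
    from LIM_D[OF this, of "f i a - y'"] y'(2) obtain s where s: "s > 0"
      "\<And>x. x \<noteq> a \<and> norm (x - a) < s \<Longrightarrow> norm (f i x - f i a) < f i a - y'" by auto
    define x where "x = a - s / 2"
    have "norm (f i x - f i a) < f i a - y'" using s by (intro s(2)) (simp add: x_def)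
    then have "y' < f i x" by (simp add: abs_less_iff)
    then have "phi_plus \<nu> f y' \<le> phi_plus \<nu> f (f i x)" by (intro pm) simp
    then have "phi_plus \<nu> f (f i x) > 0" using y'(1) by (simp add: Pset_def)
    moreover have "pmf \<nu> i > 0" using i(1) by (rule pmf_positive)
    ultimately have "pmf \<nu> i * phi_plus \<nu> f (f i x) > 0" by simp
    then have "phi_plus \<nu> f x > 0" using phi_plus_step[of \<nu> i f x] by linarith
    then have "x \<in> Pset" by (simp add: Pset_def)
    then have "a \<le> x" unfolding a_def by (rule cInf_lower[OF _ bdd])
    then show False using s(1) by (simp add: x_def)
  qed
  define Gs where "Gs y = UNIV - Aset f y" for y
  have Gm: "Gs y \<in> sets (SS \<nu>)" for y
    unfolding Gs_def using Aset_meas[of f y \<nu>] by (metis sets.compl_sets space_SS)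
  have inv: "\<omega> \<in> Gs z \<longleftrightarrow> sdrop n \<omega> \<in> Gs (walk f \<omega> n z)" for \<omega> n
    unfolding Gs_def using Aset_shift[of \<omega> f z n] by simp
  have null: "Gs z \<inter> {\<omega>. \<forall>N. \<exists>n\<ge>N. real_of_int M \<le> walk f \<omega> n z} \<in> null_sets (SS \<nu>)" for M :: int
  proof -
    have bound: "measure (SS \<nu>) (Gs y) \<le> 1 - phi_plus \<nu> f (real_of_int M)" if "real_of_int M \<le> y" for y
    proof -
      have "measure (SS \<nu>) (Gs y) = 1 - phi_plus \<nu> f y"
        unfolding Gs_def phi_plus_Aset using P.prob_compl[OF Aset_meas[of f y \<nu>]] by simp
      also have "\<dots> \<le> 1 - phi_plus \<nu> f (real_of_int M)" using pm[OF that] by simp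
      finally show ?thesis .
    qed
    have "measure (SS \<nu>) (Gs z \<inter> {\<omega>. \<forall>N. \<exists>n\<ge>N. real_of_int M \<le> walk f \<omega> n z}) = 0"
      by (rule key_null[OF Gm inv bound allpos])
    moreover have "Gs z \<inter> {\<omega>. \<forall>N. \<exists>n\<ge>N. real_of_int M \<le> walk f \<omega> n z} \<in> sets (SS \<nu>)"
    proof -
      have "{\<omega>. \<forall>N. \<exists>n\<ge>N. real_of_int M \<le> walk f \<omega> n z} = {\<omega>\<in>space (SS \<nu>). \<forall>N. \<exists>n\<ge>N. real_of_int M \<le> walk f \<omega> n z}"
        by simp
      also have "\<dots> \<in> sets (SS \<nu>)" by measurable
      finally show ?thesis using Gm[of z] by blast
    qed
    ultimately show ?thesis by (simp add: P.emeasure_eq_measure null_sets_def)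
  qed
  have Unull: "(\<Union>M::int. Gs z \<inter> {\<omega>. \<forall>N. \<exists>n\<ge>N. real_of_int M \<le> walk f \<omega> n z}) \<in> null_sets (SS \<nu>)"
    using null by (rule null_sets_UN)
  have Esub: "UNIV - (Aset f z \<union> Bset f z) \<subseteq> (\<Union>M::int. Gs z \<inter> {\<omega>. \<forall>N. \<exists>n\<ge>N. real_of_int M \<le> walk f \<omega> n z})"
  proof
    fix \<omega> assume "\<omega> \<in> UNIV - (Aset f z \<union> Bset f z)"
    then have nA: "\<omega> \<notin> Aset f z" and nB: "\<omega> \<notin> Bset f z" by auto
    from nB obtain m :: nat where m: "\<forall>N. \<exists>n\<ge>N. \<not> walk f \<omega> n z \<le> - real m"
      unfolding Bset_def at_bot_nat_iff by blast
    have "\<forall>N. \<exists>n\<ge>N. real_of_int (- int m) \<le> walk f \<omega> n z"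
    proof
      fix N
      from m obtain n where "n \<ge> N" "\<not> walk f \<omega> n z \<le> - real m" by blast
      then show "\<exists>n\<ge>N. real_of_int (- int m) \<le> walk f \<omega> n z" by (intro exI[of _ n]) auto
    qed
    then have "\<omega> \<in> Gs z \<inter> {\<omega>. \<forall>N. \<exists>n\<ge>N. real_of_int (- int m) \<le> walk f \<omega> n z}"
      using nA by (simp add: Gs_def)
    then show "\<omega> \<in> (\<Union>M::int. Gs z \<inter> {\<omega>. \<forall>N. \<exists>n\<ge>N. real_of_int M \<le> walk f \<omega> n z})"
      by (rule UN_I[OF UNIV_I])
  qed
  have Emeas: "UNIV - (Aset f z \<union> Bset f z) \<in> sets (SS \<nu>)"
    using Aset_meas[of f z \<nu>] Bset_meas[of f z \<nu>] by (metis sets.compl_sets sets.Un space_SS)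
  have "UNIV - (Aset f z \<union> Bset f z) \<in> null_sets (SS \<nu>)"
    by (rule null_sets_subset[OF Unull Emeas Esub])
  then have "measure (SS \<nu>) (UNIV - (Aset f z \<union> Bset f z)) = 0"
    by (simp add: P.emeasure_eq_measure null_sets_def)
  moreover have "measure (SS \<nu>) (UNIV - (Aset f z \<union> Bset f z)) = 1 - measure (SS \<nu>) (Aset f z \<union> Bset f z)"
    using P.prob_compl[of "Aset f z \<union> Bset f z"] by simp
  moreover have "measure (SS \<nu>) (Aset f z \<union> Bset f z) = measure (SS \<nu>) (Aset f z) + measure (SS \<nu>) (Bset f z)"
    using AB_disj[of f z] by (intro P.finite_measure_Union) auto
  ultimately show ?thesis by (simp add: phi_plus_Aset phi_minus_Bset)
qed

lemma walk_neg: "walk (\<lambda>i x. - f i (- x)) \<omega> n x = - walk f \<omega> n (- x)"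
  by (induction n arbitrary: x) auto

lemma phi_plus_neg: "phi_plus \<nu> (\<lambda>i x. - f i (- x)) x = phi_minus \<nu> f (- x)"
proof -
  have "Aset (\<lambda>i x. - f i (- x)) x = Bset f (- x)"
    unfolding Aset_def Bset_def walk_neg
    using filterlim_uminus_at_top[of "\<lambda>n. - walk f _ n (- x)" sequentially] by simp
  then show ?thesis by (simp add: phi_plus_Aset phi_minus_Bset)
qed

lemma phi_minus_neg: "phi_minus \<nu> (\<lambda>i x. - f i (- x)) x = phi_plus \<nu> f (- x)"
proof -
  have "Bset (\<lambda>i x. - f i (- x)) x = Aset f (- x)"
    unfolding Aset_def Bset_def walk_neg
    using filterlim_uminus_at_top[of "\<lambda>n. walk f _ n (- x)" sequentially] by simp
  then show ?thesis by (simp add: phi_plus_Aset phi_minus_Bset)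
qed

theorem proposition3:
  fixes \<nu> :: "nat pmf" and f :: "nat \<Rightarrow> real \<Rightarrow> real"
  assumes "\<And>i. i \<in> set_pmf \<nu> \<Longrightarrow> homeo_plus (f i)"
    and "shiftable \<nu> f"
  shows "(\<forall>z. phi_plus \<nu> f z + phi_minus \<nu> f z = 1) \<or>
         (\<forall>z. phi_plus \<nu> f z + phi_minus \<nu> f z = 0)"
proof -
  have sm: "strict_mono (f i)" if "i \<in> set_pmf \<nu>" for i
    using assms(1)[OF that] by (simp add: homeo_plus_def)
  have ct: "continuous_on UNIV (f i)" if "i \<in> set_pmf \<nu>" for i
    using assms(1)[OF that] by (auto simp: homeo_plus_def homeomorphism_def)
  define g where "g i x = - f i (- x)" for i x
  have smg: "strict_mono (g i)" if "i \<in> set_pmf \<nu>" for i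
    using sm[OF that] by (auto simp: g_def strict_mono_def)
  have ctg: "continuous_on UNIV (g i)" if "i \<in> set_pmf \<nu>" for i
  proof -
    have "continuous_on UNIV (\<lambda>x. f i (- x))"
      by (rule continuous_on_compose2[OF ct[OF that]]) (auto intro: continuous_intros)
    then show ?thesis unfolding g_def by (intro continuous_on_minus)
  qed
  have shg: "shiftable \<nu> g"
    unfolding shiftable_def
  proof
    fix x
    from assms(2) obtain i j where ij: "i \<in> set_pmf \<nu>" "j \<in> set_pmf \<nu>" "f j (- x) < - x" "- x < f i (- x)"
      unfolding shiftable_def by blast
    have "g i x < x \<and> x < g j x" using ij(3,4) by (simp add: g_def)
    then show "\<exists>i\<in>set_pmf \<nu>. \<exists>j\<in>set_pmf \<nu>. g j x < x \<and> x < g i x"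
      using ij(1,2) by blast
  qed
  have gf: "g = (\<lambda>i x. - f i (- x))" by (simp add: g_def fun_eq_iff)
  show ?thesis
  proof (cases "\<exists>x0. phi_plus \<nu> f x0 > 0")
    case True
    then obtain x0 where "phi_plus \<nu> f x0 > 0" by blast
    then show ?thesis using main_dir[OF sm ct assms(2)] by blast
  next
    case False
    note F1 = False
    show ?thesis
    proof (cases "\<exists>x0. phi_minus \<nu> f x0 > 0")
      case True
      then obtain x0 where "phi_minus \<nu> f x0 > 0" by blast
      then have "phi_plus \<nu> g (- x0) > 0" unfolding gf phi_plus_neg by simp
      from main_dir[OF smg ctg shg this]
      have "\<And>z. phi_plus \<nu> g z + phi_minus \<nu> g z = 1" by blast
      then have "\<And>z. phi_minus \<nu> f (- z) + phi_plus \<nu> f (- z) = 1"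
        unfolding gf phi_plus_neg phi_minus_neg by blast
      from this[of "- _"] show ?thesis by (simp add: add.commute)
    next
      case False
      have "phi_plus \<nu> f z = 0" for z
      proof -
        have "0 \<le> phi_plus \<nu> f z" by (simp add: phi_plus_Aset)
        moreover have "\<not> 0 < phi_plus \<nu> f z" using F1 by blast
        ultimately show ?thesis by linarith
      qed
      moreover have "phi_minus \<nu> f z = 0" for z
      proof -
        have "0 \<le> phi_minus \<nu> f z" by (simp add: phi_minus_Bset)
        moreover have "\<not> 0 < phi_minus \<nu> f z" using False by blast
        ultimately show ?thesis by linarith
      qed
      ultimately show ?thesis by simp
    qed
  qed
qed

end
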